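(* Let $\nu:\binom{E}{d}\to\mathbb{Z}\cup\{\infty\}$ be a matroid valuation and let $\beta\in\mathbb{R}^E$. Then $$C^\nu_\beta=\{\alpha\in\mathbb{R}^E:\ \alpha_i-\alpha_j\ge\nu(B)-\nu(B')\text{ for all }B\in\mathcal{B}^\nu_\beta,\ B'\in\mathcal{B}^\nu\text{ such that }B'=B-i+j\}.$$
   Context: $E$ is a finite set and $\binom{E}{d}$ the set of its $d$-subsets; $B-i+j:=(B\cup\{j\})\setminus\{i\}$, $e_B:=\sum_{i\in B}e_i$. A matroid valuation is $\nu:\binom{E}{d}\to\mathbb{R}\cup\{\infty\}$ with (V1) $\nu(B)<\infty$ for some $B$; (V2) for all $B,B'$ and $i\in B\setminus B'$ there is $j\in B'\setminus B$ with $\nu(B)+\nu(B')\ge\nu(B-i+j)+\nu(B'+i-j)$. $\mathcal{B}^\nu:=\{B:\nu(B)<\infty\}$. For $\alpha\in\mathbb{R}^E$, $g^\nu(\alpha):=\sup\{e_{B'}^T\alpha-\nu(B'):B'\in\binom{E}{d}\}$ and $\mathcal{B}^\nu_\alpha:=\{B\in\binom{E}{d}:e_B^T\alpha-\nu(B)=g^\nu(\alpha)\}$. $C^\nu_\beta:=\{\alpha\in\mathbb{R}^E:\mathcal{B}^\nu_\alpha\supseteq\mathcal{B}^\nu_\beta\}$. *)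

theory Defs
  imports "HOL-Library.Extended_Real"
begin

definition dsubsets :: "'e set \<Rightarrow> nat \<Rightarrow> 'e set set" where
  "dsubsets E d = {B. B \<subseteq> E \<and> card B = d}"

definition exch :: "'e set \<Rightarrow> 'e \<Rightarrow> 'e \<Rightarrow> 'e set" where
  "exch B i j = (B \<union> {j}) - {i}"

definition matroid_valuation :: "'e set \<Rightarrow> nat \<Rightarrow> ('e set \<Rightarrow> ereal) \<Rightarrow> bool" where
  "matroid_valuation E d \<nu> \<longleftrightarrow>
     (\<forall>B\<in>dsubsets E d. \<nu> B \<noteq> -\<infinity>) \<and>
     (\<exists>B\<in>dsubsets E d. \<nu> B < \<infinity>) \<and>
     (\<forall>B\<in>dsubsets E d. \<forall>B'\<in>dsubsets E d. \<forall>i\<in>B - B'. \<exists>j\<in>B' - B.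
        \<nu> B + \<nu> B' \<ge> \<nu> (exch B i j) + \<nu> (exch B' j i))"

definition bases_of :: "'e set \<Rightarrow> nat \<Rightarrow> ('e set \<Rightarrow> ereal) \<Rightarrow> 'e set set" where
  "bases_of E d \<nu> = {B \<in> dsubsets E d. \<nu> B < \<infinity>}"

definition gfun :: "'e set \<Rightarrow> nat \<Rightarrow> ('e set \<Rightarrow> ereal) \<Rightarrow> ('e \<Rightarrow> real) \<Rightarrow> ereal" where
  "gfun E d \<nu> \<alpha> = (SUP B'\<in>dsubsets E d. ereal (\<Sum>i\<in>B'. \<alpha> i) - \<nu> B')"

definition opt_bases :: "'e set \<Rightarrow> nat \<Rightarrow> ('e set \<Rightarrow> ereal) \<Rightarrow> ('e \<Rightarrow> real) \<Rightarrow> 'e set set" where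
  "opt_bases E d \<nu> \<alpha> = {B \<in> dsubsets E d. ereal (\<Sum>i\<in>B. \<alpha> i) - \<nu> B = gfun E d \<nu> \<alpha>}"

definition cone :: "'e set \<Rightarrow> nat \<Rightarrow> ('e set \<Rightarrow> ereal) \<Rightarrow> ('e \<Rightarrow> real) \<Rightarrow> ('e \<Rightarrow> real) set" where
  "cone E d \<nu> \<beta> = {\<alpha>. opt_bases E d \<nu> \<alpha> \<supseteq> opt_bases E d \<nu> \<beta>}"

end

theory Submission
  imports Defs
begin

lemma exch_sum:
  assumes "finite C" "i \<in> C" "j \<notin> C"
  shows "sum \<alpha> (exch C i j) = sum \<alpha> C - \<alpha> i + (\<alpha> j :: real)"
proof -
  have e: "exch C i j = insert j (C - {i})" using assms unfolding exch_def by auto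
  have "sum \<alpha> (exch C i j) = \<alpha> j + sum \<alpha> (C - {i})"
    unfolding e using assms by (subst sum.insert) auto
  also have "\<dots> = \<alpha> j + (sum \<alpha> C - \<alpha> i)" using assms by (simp add: sum_diff1)
  finally show ?thesis by simp
qed

lemma exch_ds:
  assumes "C \<in> dsubsets E d" "finite E" "i \<in> C" "j \<notin> C" "j \<in> E"
  shows "exch C i j \<in> dsubsets E d"
proof -
  have fC: "finite C" using assms unfolding dsubsets_def by (auto intro: finite_subset)
  have e: "exch C i j = insert j (C - {i})" using assms unfolding exch_def by auto
  have "card (exch C i j) = card C" unfolding e using assms fC
    by (simp add: card_insert_if card_Diff_singleton)
       (metis One_nat_def Suc_pred card_gt_0_iff empty_iff)
  then show ?thesis using assms unfolding dsubsets_def e by auto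
qed

lemma lg:
  assumes fin: "finite E" and mv: "matroid_valuation E d \<nu>" and BE: "B \<in> dsubsets E d"
    and Bf: "\<nu> B = ereal b"
    and loc: "\<And>i j. i \<in> B \<Longrightarrow> j \<notin> B \<Longrightarrow> exch B i j \<in> bases_of E d \<nu> \<Longrightarrow>
               ereal (\<alpha> i - \<alpha> j) \<ge> \<nu> B - \<nu> (exch B i j)"
  shows "C \<in> dsubsets E d \<Longrightarrow> ereal (sum \<alpha> C) - \<nu> C \<le> ereal (sum \<alpha> B) - \<nu> B"
proof (induction "card (C - B)" arbitrary: C rule: less_induct)
  case less
  have fB: "finite B" using BE fin unfolding dsubsets_def by (auto intro: finite_subset)
  have fC: "finite C" using less.prems fin unfolding dsubsets_def by (auto intro: finite_subset)
  show ?case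
  proof (cases "\<nu> C = \<infinity>")
    case True then show ?thesis by simp
  next
    case False
    have "\<nu> C \<noteq> -\<infinity>" using mv less.prems unfolding matroid_valuation_def by auto
    then obtain c where Cc: "\<nu> C = ereal c" using False by (cases "\<nu> C") auto
    show ?thesis
    proof (cases "C - B = {}")
      case True
      then have "C \<subseteq> B" by auto
      moreover have "card C = card B" using less.prems BE unfolding dsubsets_def by auto
      ultimately have "C = B" using fB by (simp add: card_subset_eq)
      then show ?thesis by simp
    next
      case False
      then obtain i where i: "i \<in> C - B" by blast
      from mv less.prems BE i obtain j where j: "j \<in> B - C"
        and ex: "\<nu> C + \<nu> B \<ge> \<nu> (exch C i j) + \<nu> (exch B j i)"
        unfolding matroid_valuation_def by blast
      define C' where "C' = exch C i j"
      define B' where "B' = exch B j i"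
      have iE: "i \<in> E" "j \<in> E" using i j less.prems BE unfolding dsubsets_def by auto
      have C'E: "C' \<in> dsubsets E d" unfolding C'_def
        using exch_ds[OF less.prems fin] i j iE by auto
      have B'E: "B' \<in> dsubsets E d" unfolding B'_def
        using exch_ds[OF BE fin] i j iE by auto
      have nm1: "\<nu> C' \<noteq> -\<infinity>" "\<nu> B' \<noteq> -\<infinity>" using C'E B'E mv
        unfolding matroid_valuation_def by auto
      have ex': "\<nu> C' + \<nu> B' \<le> ereal (c + b)" using ex Cc Bf unfolding C'_def B'_def by simp
      have "\<nu> C' \<noteq> \<infinity>" using ex' nm1 by auto
      then obtain x where x: "\<nu> C' = ereal x" using nm1 by (cases "\<nu> C'") auto
      have "\<nu> B' \<noteq> \<infinity>" using ex' nm1 x by auto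
      then obtain y where y: "\<nu> B' = ereal y" using nm1 by (cases "\<nu> B'") auto
      have r1: "x + y \<le> c + b" using ex' x y by simp
      have B'b: "B' \<in> bases_of E d \<nu>" using B'E y unfolding bases_of_def by auto
      have "ereal (\<alpha> j - \<alpha> i) \<ge> \<nu> B - \<nu> B'" using loc[of j i] j i B'b unfolding B'_def by auto
      then have r2: "\<alpha> j - \<alpha> i \<ge> b - y" using Bf y by simp
      have "C' - B = (C - B) - {i}" unfolding C'_def exch_def using j by auto
      then have "card (C' - B) < card (C - B)" using i fC by (metis DiffI card_Diff1_less finite_Diff)
      then have "ereal (sum \<alpha> C') - \<nu> C' \<le> ereal (sum \<alpha> B) - \<nu> B" using less.hyps C'E by blast
      then have r3: "sum \<alpha> C - \<alpha> i + \<alpha> j - x \<le> sum \<alpha> B - b"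
        using x Bf exch_sum[OF fC, of i j \<alpha>] i j unfolding C'_def by simp
      have "sum \<alpha> C - c \<le> sum \<alpha> B - b" using r1 r2 r3 by linarith
      then show ?thesis using Cc Bf by simp
    qed
  qed
qed

lemma opt_fin:
  assumes mv: "matroid_valuation E d \<nu>" and B: "B \<in> opt_bases E d \<nu> \<alpha>"
  shows "\<nu> B \<noteq> \<infinity>"
proof
  assume inf: "\<nu> B = \<infinity>"
  obtain B0 where B0: "B0 \<in> dsubsets E d" "\<nu> B0 < \<infinity>" using mv unfolding matroid_valuation_def by auto
  have "\<nu> B0 \<noteq> -\<infinity>" using mv B0 unfolding matroid_valuation_def by auto
  then obtain r where r: "\<nu> B0 = ereal r" using B0 by (cases "\<nu> B0") auto
  have "ereal (sum \<alpha> B0) - \<nu> B0 \<le> gfun E d \<nu> \<alpha>" unfolding gfun_def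
    using B0 by (intro SUP_upper) auto
  moreover have "gfun E d \<nu> \<alpha> = -\<infinity>" using B inf unfolding opt_bases_def by auto
  ultimately show False using r by simp
qed

theorem mainTheorem15:
  fixes E :: "'e set" and d :: nat and \<nu> :: "'e set \<Rightarrow> ereal" and \<beta> :: "'e \<Rightarrow> real"
  assumes "finite E"
    and "matroid_valuation E d \<nu>"
    and "\<forall>B\<in>dsubsets E d. \<nu> B = \<infinity> \<or> (\<exists>z::int. \<nu> B = ereal (real_of_int z))"
  shows "cone E d \<nu> \<beta> =
    {\<alpha>. \<forall>B\<in>opt_bases E d \<nu> \<beta>. \<forall>B'\<in>bases_of E d \<nu>. \<forall>i j.
        i \<in> B \<and> j \<notin> B \<and> B' = exch B i j \<longrightarrow> ereal (\<alpha> i - \<alpha> j) \<ge> \<nu> B - \<nu> B'}"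
proof (intro equalityI subsetI CollectI ballI allI impI)
  fix \<alpha> B B' i j
  assume a: "\<alpha> \<in> cone E d \<nu> \<beta>" and B: "B \<in> opt_bases E d \<nu> \<beta>" and B': "B' \<in> bases_of E d \<nu>"
    and ij: "i \<in> B \<and> j \<notin> B \<and> B' = exch B i j"
  have Ba: "B \<in> opt_bases E d \<nu> \<alpha>" using a B unfolding cone_def by auto
  have "\<nu> B \<noteq> \<infinity>" using opt_fin[OF assms(2) Ba] .
  moreover have "\<nu> B \<noteq> -\<infinity>" using assms(2) Ba unfolding matroid_valuation_def opt_bases_def by auto
  ultimately obtain b where b: "\<nu> B = ereal b" by (cases "\<nu> B") auto
  have "\<nu> B' \<noteq> -\<infinity>" "\<nu> B' \<noteq> \<infinity>" using assms(2) B' unfolding matroid_valuation_def bases_of_def by auto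
  then obtain b' where b': "\<nu> B' = ereal b'" by (cases "\<nu> B'") auto
  have fB: "finite B" using Ba assms(1) unfolding opt_bases_def dsubsets_def by (auto intro: finite_subset)
  have "ereal (sum \<alpha> B') - \<nu> B' \<le> gfun E d \<nu> \<alpha>" unfolding gfun_def
    using B' unfolding bases_of_def by (intro SUP_upper) auto
  also have "\<dots> = ereal (sum \<alpha> B) - \<nu> B" using Ba unfolding opt_bases_def by auto
  finally have "sum \<alpha> B' - b' \<le> sum \<alpha> B - b" using b b' by simp
  moreover have "sum \<alpha> B' = sum \<alpha> B - \<alpha> i + \<alpha> j" using ij exch_sum[OF fB, of i j \<alpha>] by auto
  ultimately show "ereal (\<alpha> i - \<alpha> j) \<ge> \<nu> B - \<nu> B'" using b b' by simp
next
  fix \<alpha>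
  assume a: "\<alpha> \<in> {\<alpha>. \<forall>B\<in>opt_bases E d \<nu> \<beta>. \<forall>B'\<in>bases_of E d \<nu>. \<forall>i j.
        i \<in> B \<and> j \<notin> B \<and> B' = exch B i j \<longrightarrow> ereal (\<alpha> i - \<alpha> j) \<ge> \<nu> B - \<nu> B'}"
  show "\<alpha> \<in> cone E d \<nu> \<beta>" unfolding cone_def
  proof (intro CollectI subsetI)
    fix B assume B: "B \<in> opt_bases E d \<nu> \<beta>"
    have BE: "B \<in> dsubsets E d" using B unfolding opt_bases_def by auto
    have "\<nu> B \<noteq> \<infinity>" using opt_fin[OF assms(2) B] .
    moreover have "\<nu> B \<noteq> -\<infinity>" using assms(2) BE unfolding matroid_valuation_def by auto
    ultimately obtain b where b: "\<nu> B = ereal b" by (cases "\<nu> B") auto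
    have g: "\<And>C. C \<in> dsubsets E d \<Longrightarrow> ereal (sum \<alpha> C) - \<nu> C \<le> ereal (sum \<alpha> B) - \<nu> B"
      by (rule lg[OF assms(1,2) BE b]) (use a B in auto)
    have "gfun E d \<nu> \<alpha> = ereal (sum \<alpha> B) - \<nu> B" unfolding gfun_def
      by (intro antisym SUP_least SUP_upper g BE)
    then show "B \<in> opt_bases E d \<nu> \<alpha>" using BE unfolding opt_bases_def by auto
  qed
qed

end
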